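(* Let $p$ be a prime and $\theta\in\mathbb{F}_p((X^{-1}))$. Then $$\inf_{r\geq 0,\ Q\in\mathbb{F}_p[X]\setminus\{0\}} |Q|\cdot\|X^rQ\theta\|>0$$ (i.e. $\theta$ is a counterexample to the $X$-adic Littlewood conjecture over $\mathbb{F}_p$) if and only if there is a constant $D\in\mathbb{N}_0$ such that for every $r\geq0$ the partial quotients $A^{(r)}_j$ of the simple continued fraction expansion $[A^{(r)}_1,A^{(r)}_2,\dots]$ of $\langle X^r\theta\rangle$ satisfy $\deg(A^{(r)}_j)\leq D+1$ for all $j\geq1$. Moreover, if such a $D$ exists (we then say $\theta$ has finite deficiency $D(\theta)=D$), then $$\inf_{r\geq 0,\ Q\in\mathbb{F}_p[X]\setminus\{0\}} |Q|\cdot\|X^rQ\theta\|\geq 2^{-(D+1)}.$$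
   Context: $\mathbb{F}_p((X^{-1}))$ is the field of formal Laurent series $\theta=\sum_{i=j}^\infty a_iX^{-i}$ over $\mathbb{F}_p$ ($a_j\ne0$), with $\deg(\theta)=-j$, $|\theta|=2^{-j}$ ($|0|=0$), fractional part $\langle\theta\rangle=\sum_{i\ge\max\{1,j\}}a_iX^{-i}$, and $\|\theta\|=|\langle\theta\rangle|$. For a Laurent series $\eta$ with $\langle\eta\rangle=\eta$, its simple continued fraction expansion $\eta=[A_1,A_2,\dots]$ (i.e. $[0;A_1,A_2,\dots]$) has polynomial partial quotients $A_i\in\mathbb{F}_p[X]$ of degree $\ge1$; convergents $P_h/Q_h=[0;A_1,\dots,A_h]$ have $\deg Q_h=\sum_{i=1}^h\deg A_i$. *)

theory Defs
  imports "HOL-Computational_Algebra.Formal_Laurent_Series" "HOL-Computational_Algebra.Primes" Complex_Main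
begin

text \<open>Encoding: a Laurent series theta = sum_i a_i X^(-i) in F_p((X^-1)) is represented
  as an element of 'a fls (formal Laurent series in the variable t = X^(-1)),
  with coefficient a_i stored at index i, i.e. fls_nth theta i = a_i.
  Hence deg theta = - fls_subdegree theta.\<close>

definition poly_fls :: "'a::field poly \<Rightarrow> 'a fls" where
  "poly_fls Q = (\<Sum>k\<le>degree Q. fls_const (coeff Q k) * fls_X_intpow (- int k))"

definition Xpow :: "nat \<Rightarrow> 'a::field fls" where
  "Xpow r = fls_X_intpow (- int r)"

text \<open>Polynomial (integral) part: the terms a_i X^(-i) with i \<le> 0, as a polynomial in X.\<close>
definition int_poly :: "'a::field fls \<Rightarrow> 'a poly" where
  "int_poly \<theta> = fls_prpart \<theta> + [:(fls_nth \<theta> 0):]"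

definition frac_part :: "'a::field fls \<Rightarrow> 'a fls" where
  "frac_part \<theta> = \<theta> - poly_fls (int_poly \<theta>)"

definition abs_L :: "'a::field fls \<Rightarrow> real" where
  "abs_L \<theta> = (if \<theta> = 0 then 0 else 2 powr (- real_of_int (fls_subdegree \<theta>)))"

definition dist_poly :: "'a::field fls \<Rightarrow> real" where
  "dist_poly \<theta> = abs_L (frac_part \<theta>)"

primrec cf_rem :: "'a::field fls \<Rightarrow> nat \<Rightarrow> 'a fls" where
  "cf_rem \<eta> 0 = \<eta>"
| "cf_rem \<eta> (Suc n) = frac_part (inverse (cf_rem \<eta> n))"

text \<open>j-th partial quotient A_j (j \<ge> 1) = polynomial part of 1/eta_(j-1);
  it exists iff eta_(j-1) \<noteq> 0.\<close>
definition partial_quotient :: "'a::field fls \<Rightarrow> nat \<Rightarrow> 'a poly" where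
  "partial_quotient \<eta> j = int_poly (inverse (cf_rem \<eta> (j - 1)))"

text \<open>Bounded partial quotients with bound D+1 for all shifts <X^r theta>.
  A terminated expansion (eta_(j-1) = 0) counts as an infinite partial quotient
  (degree infinity), so it violates the bound.\<close>
definition bounded_deficiency :: "'a::field fls \<Rightarrow> nat \<Rightarrow> bool" where
  "bounded_deficiency \<theta> D \<longleftrightarrow>
     (\<forall>r::nat. \<forall>j::nat. j \<ge> 1 \<longrightarrow>
        cf_rem (frac_part (Xpow r * \<theta>)) (j - 1) \<noteq> 0 \<and>
        degree (partial_quotient (frac_part (Xpow r * \<theta>)) j) \<le> D + 1)"

definition xadic_inf :: "'a::field fls \<Rightarrow> real" where
  "xadic_inf \<theta> = (INF rQ \<in> {(r::nat, Q::'a poly). Q \<noteq> 0}.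
      abs_L (poly_fls (snd rQ)) * dist_poly (Xpow (fst rQ) * poly_fls (snd rQ) * \<theta>))"

end

theory Submission
  imports Defs
begin
unbundle fps_syntax

definition ispoly :: "'a::field fls \<Rightarrow> bool" where
  "ispoly x \<longleftrightarrow> (\<forall>i>0. x $$ i = 0)"

lemma poly_fls_nth: "poly_fls Q $$ i = (if i \<le> 0 then coeff Q (nat (-i)) else 0)"
proof -
  have "poly_fls Q $$ i = (\<Sum>k\<le>degree Q. coeff Q k * (if i + int k = 0 then 1 else 0))"
    unfolding poly_fls_def fls_nth_sum by simp
  also have "\<dots> = (\<Sum>k\<in>{k. k \<le> degree Q \<and> i + int k = 0}. coeff Q k)"
    by (simp add: sum.inter_filter[symmetric] if_distrib cong: if_cong)
  also have "\<dots> = (if i \<le> 0 then coeff Q (nat (-i)) else 0)"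
  proof (cases "i \<le> 0")
    case True
    show ?thesis
    proof (cases "nat (-i) \<le> degree Q")
      case True2: True
      have "{k. k \<le> degree Q \<and> i + int k = 0} = {nat (-i)}" using True True2 by auto
      then show ?thesis using True by simp
    next
      case False
      have "{k. k \<le> degree Q \<and> i + int k = 0} = {}" using True False by auto
      then show ?thesis using True False by (simp add: coeff_eq_0 del: Collect_empty_eq)
    qed
  next
    case False
    have "{k. k \<le> degree Q \<and> i + int k = 0} = {}" using False by auto
    then show ?thesis using False by simp
  qed
  finally show ?thesis .
qed


lemma int_poly_coeff: "coeff (int_poly x) n = x $$ (- int n)"
  unfolding int_poly_def by (simp add: coeff_pCons split: nat.splits)

lemma poly_int_nth: "poly_fls (int_poly x) $$ i = (if i \<le> 0 then x $$ i else 0)"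
  by (simp add: poly_fls_nth int_poly_coeff)

lemma frac_nth: "frac_part x $$ i = (if i \<le> 0 then 0 else x $$ i)"
  unfolding frac_part_def by (simp add: poly_int_nth)

lemma ispoly_poly_fls: "ispoly (poly_fls Q)"
  unfolding ispoly_def by (simp add: poly_fls_nth)

lemma ispoly_add: "ispoly x \<Longrightarrow> ispoly y \<Longrightarrow> ispoly (x + y)"
  unfolding ispoly_def by simp

lemma ispoly_diff: "ispoly x \<Longrightarrow> ispoly y \<Longrightarrow> ispoly (x - y)"
  unfolding ispoly_def by simp

lemma ispoly_uminus: "ispoly x \<Longrightarrow> ispoly (- x)"
  unfolding ispoly_def by simp

lemma ispoly_mult: "ispoly x \<Longrightarrow> ispoly y \<Longrightarrow> ispoly (x * y)"
  unfolding ispoly_def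
proof (intro allI impI)
  fix n :: int assume x: "\<forall>i>0. x $$ i = 0" and y: "\<forall>i>0. y $$ i = 0" and n: "n > 0"
  have "(x * y) $$ n = (\<Sum>i=fls_subdegree x..n - fls_subdegree y. x $$ i * y $$ (n - i))"
    by (rule fls_times_nth(2))
  also have "\<dots> = 0"
  proof (rule sum.neutral, intro ballI)
    fix i assume "i \<in> {fls_subdegree x..n - fls_subdegree y}"
    show "x $$ i * y $$ (n - i) = 0"
      using x y n by (cases "i > 0") auto
  qed
  finally show "(x * y) $$ n = 0" .
qed

lemma ispoly_int_part: "ispoly (x - frac_part x)"
  unfolding frac_part_def by (simp add: ispoly_poly_fls)

lemma frac_add_poly: "ispoly y \<Longrightarrow> frac_part (x + y) = frac_part x"
  by (rule fls_eqI) (auto simp: frac_nth ispoly_def)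

lemma frac_small: "x = 0 \<or> fls_subdegree x \<ge> 1 \<Longrightarrow> frac_part x = x"
  by (rule fls_eqI) (auto simp: frac_nth)

lemma ispoly_eq: "ispoly x \<Longrightarrow> poly_fls (int_poly x) = x"
  by (rule fls_eqI) (auto simp: poly_int_nth ispoly_def)

lemma poly_fls_eq0: "poly_fls Q = 0 \<Longrightarrow> Q = 0"
proof -
  assume "poly_fls Q = 0"
  then have "\<And>n. poly_fls Q $$ (- int n) = 0" by simp
  then show "Q = 0" by (intro poly_eqI) (simp add: poly_fls_nth)
qed

lemma poly_fls_zero[simp]: "poly_fls 0 = 0"
  by (rule fls_eqI) (simp add: poly_fls_nth)

lemma poly_fls_one: "poly_fls 1 = 1"
  by (rule fls_eqI) (simp add: poly_fls_nth)

lemma poly_fls_subdegree: "Q \<noteq> 0 \<Longrightarrow> fls_subdegree (poly_fls Q) = - int (degree Q)"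
  by (rule fls_subdegree_eqI) (auto simp: poly_fls_nth coeff_eq_0)

lemma abs_L_ge0: "abs_L x \<ge> 0"
  unfolding abs_L_def by simp

lemma abs_L_0[simp]: "abs_L 0 = 0"
  unfolding abs_L_def by simp

lemma abs_L_eq0: "abs_L x = 0 \<longleftrightarrow> x = 0"
  unfolding abs_L_def by simp

lemma abs_L_mult: "abs_L (x * y) = abs_L x * abs_L y"
  unfolding abs_L_def by (simp add: powr_add[symmetric] algebra_simps)

lemma abs_L_inverse: "abs_L (inverse x) = inverse (abs_L x)"
  unfolding abs_L_def by (simp add: powr_minus)

lemma abs_L_uminus: "abs_L (- x) = abs_L x"
  unfolding abs_L_def by simp

lemma two_powr_lt1: "(2::real) powr a < 1 \<longleftrightarrow> a < 0"
  using powr_less_cancel_iff[of 2 a 0] by simp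

lemma two_powr_ge1: "(2::real) powr a \<ge> 1 \<longleftrightarrow> a \<ge> 0"
  using two_powr_lt1[of a] by linarith

lemma abs_L_lt1: "abs_L x < 1 \<longleftrightarrow> x = 0 \<or> fls_subdegree x \<ge> 1"
  unfolding abs_L_def by (auto simp: two_powr_lt1)

lemma abs_L_frac_lt1: "abs_L (frac_part x) < 1"
proof -
  have "frac_part x = 0 \<or> fls_subdegree (frac_part x) \<ge> 1"
  proof (cases "frac_part x = 0")
    case False
    have "frac_part x $$ fls_subdegree (frac_part x) \<noteq> 0" using False by simp
    then show ?thesis by (auto simp: frac_nth split: if_splits)
  qed simp
  then show ?thesis by (simp add: abs_L_lt1)
qed

lemma abs_L_ispoly: "ispoly x \<Longrightarrow> x \<noteq> 0 \<Longrightarrow> abs_L x \<ge> 1"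
proof -
  assume "ispoly x" "x \<noteq> 0"
  then have "x $$ fls_subdegree x \<noteq> 0" by simp
  then have "fls_subdegree x \<le> 0" using \<open>ispoly x\<close> unfolding ispoly_def by force
  then show ?thesis using \<open>x \<noteq> 0\<close> unfolding abs_L_def by (simp add: two_powr_ge1)
qed

lemma abs_L_add_eq: "abs_L y < abs_L x \<Longrightarrow> abs_L (x + y) = abs_L x"
proof (cases "y = 0")
  case False
  assume a: "abs_L y < abs_L x"
  then have "x \<noteq> 0" using abs_L_ge0[of y] by (auto simp: abs_L_def)
  then have "fls_subdegree x < fls_subdegree y" using a False by (simp add: abs_L_def)
  then have "fls_subdegree (x + y) = fls_subdegree x" by (rule fls_subdegree_add_eq1[OF \<open>x \<noteq> 0\<close>])
  moreover have "x + y \<noteq> 0"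
  proof
    assume "x + y = 0" then have "y = - x" by (simp add: eq_neg_iff_add_eq_0 add.commute)
    then show False using a by (simp add: abs_L_uminus)
  qed
  ultimately show ?thesis using \<open>x \<noteq> 0\<close> by (simp add: abs_L_def)
qed simp

lemma abs_L_diff_eq: "abs_L y < abs_L x \<Longrightarrow> abs_L (x - y) = abs_L x"
  using abs_L_add_eq[of "-y" x] by (simp add: abs_L_uminus)

lemma abs_L_poly_fls: "Q \<noteq> 0 \<Longrightarrow> abs_L (poly_fls Q) = 2 ^ degree Q"
proof -
  assume Q: "Q \<noteq> 0"
  have "poly_fls Q \<noteq> 0" using Q poly_fls_eq0 by blast
  then show ?thesis using Q by (simp add: abs_L_def poly_fls_subdegree powr_realpow)
qed

lemma frac_eq: "ispoly P \<Longrightarrow> abs_L (x - P) < 1 \<Longrightarrow> frac_part x = x - P"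
proof -
  assume P: "ispoly P" and s: "abs_L (x - P) < 1"
  have "frac_part x = frac_part ((x - P) + P)" by simp
  also have "\<dots> = frac_part (x - P)" by (rule frac_add_poly[OF P])
  also have "\<dots> = x - P" by (rule frac_small) (use s in \<open>simp add: abs_L_lt1\<close>)
  finally show ?thesis .
qed

lemma cf_rem_shift: "cf_rem (frac_part (inverse \<eta>)) n = cf_rem \<eta> (Suc n)"
  by (induction n) auto

lemma cf_rem_lt1: "abs_L \<eta> < 1 \<Longrightarrow> abs_L (cf_rem \<eta> n) < 1"
  by (cases n) (auto simp: abs_L_frac_lt1)

lemma pq_deg:
  assumes "abs_L \<eta> < 1" "\<eta> \<noteq> 0"
  shows "abs_L \<eta> = 2 powr (- real (degree (int_poly (inverse \<eta>))))"
proof -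
  define y where "y = inverse \<eta>"
  have ay: "abs_L y > 1" using assms unfolding y_def abs_L_inverse
    using abs_L_eq0 abs_L_ge0 one_less_inverse by (metis less_eq_real_def)
  have e: "poly_fls (int_poly y) = y - frac_part y" unfolding frac_part_def by simp
  have "abs_L (y - frac_part y) = abs_L y"
    by (rule abs_L_diff_eq) (use abs_L_frac_lt1[of y] ay in linarith)
  then have a2: "abs_L (poly_fls (int_poly y)) = abs_L y" using e by simp
  then have "int_poly y \<noteq> 0" using ay by auto
  then have "abs_L y = 2 ^ degree (int_poly y)" using a2 abs_L_poly_fls by metis
  then have "abs_L \<eta> = inverse (2 ^ degree (int_poly y))"
    unfolding y_def abs_L_inverse by (metis inverse_inverse_eq)
  then show ?thesis unfolding y_def by (simp add: powr_minus powr_realpow)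
qed


lemma LB:
  fixes c :: real
  shows "abs_L \<eta> < 1 \<Longrightarrow> (\<forall>j. cf_rem \<eta> j \<noteq> 0 \<and> abs_L (cf_rem \<eta> j) \<ge> c) \<Longrightarrow> Q \<noteq> 0
    \<Longrightarrow> abs_L (poly_fls Q) * dist_poly (poly_fls Q * \<eta>) \<ge> c"
proof (induction "degree Q" arbitrary: Q \<eta> rule: less_induct)
  case less
  define q where "q = poly_fls Q"
  have eta0: "\<eta> \<noteq> 0" and ceta: "c \<le> abs_L \<eta>" using less.prems(2)[rule_format, of 0] by auto
  have aeta: "abs_L \<eta> > 0" using eta0 abs_L_eq0 abs_L_ge0 by (metis less_eq_real_def)
  have q0: "q \<noteq> 0" using less.prems(3) poly_fls_eq0 q_def by metis
  have aq: "abs_L q \<ge> 1" using abs_L_ispoly[OF _ q0] ispoly_poly_fls q_def by blast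
  define e where "e = frac_part (q * \<eta>)"
  define P where "P = q * \<eta> - e"
  have Pp: "ispoly P" unfolding P_def e_def by (rule ispoly_int_part)
  have ae: "abs_L e < 1" "abs_L e \<ge> 0" unfolding e_def by (rule abs_L_frac_lt1, rule abs_L_ge0)
  have dp: "dist_poly (q * \<eta>) = abs_L e" unfolding dist_poly_def e_def ..
  show ?case
  proof (cases "P = 0")
    case True
    then have "e = q * \<eta>" unfolding P_def by simp
    then have "abs_L q * abs_L e = abs_L q * abs_L q * abs_L \<eta>" by (simp add: abs_L_mult)
    also have "\<dots> \<ge> abs_L \<eta>"
    proof -
      have "1 * 1 \<le> abs_L q * abs_L q" using aq by (intro mult_mono) auto
      then show ?thesis using aeta mult_right_mono[of 1 "abs_L q * abs_L q" "abs_L \<eta>"] by simp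
    qed
    finally show ?thesis using ceta dp q_def by simp
  next
    case False
    have aP: "abs_L P \<ge> 1" using abs_L_ispoly[OF Pp False] .
    have "q * \<eta> = P + e" unfolding P_def by simp
    then have "abs_L (q * \<eta>) = abs_L P"
      using abs_L_add_eq[of e P] aP ae by simp
    then have aqe: "abs_L q * abs_L \<eta> = abs_L P" by (simp add: abs_L_mult)
    show ?thesis
    proof (cases "abs_L e \<ge> abs_L \<eta>")
      case True
      have "abs_L q * abs_L e \<ge> abs_L q * abs_L \<eta>" using True aq by (simp add: mult_left_mono)
      then show ?thesis using aqe aP ceta less.prems(1) dp q_def by simp
    next
      case False
      define \<eta>1 where "\<eta>1 = frac_part (inverse \<eta>)"
      define A where "A = inverse \<eta> - \<eta>1"
      have Ap: "ispoly A" unfolding A_def \<eta>1_def by (rule ispoly_int_part)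
      have "P * \<eta>1 = P * inverse \<eta> - P * A" unfolding A_def by (simp add: algebra_simps)
      also have "P * inverse \<eta> = q - e * inverse \<eta>" unfolding P_def using eta0
        by (simp add: algebra_simps)
      finally have eq: "P * \<eta>1 - (q - P * A) = - (e * inverse \<eta>)" by simp
      have ae2: "abs_L (- (e * inverse \<eta>)) = abs_L e / abs_L \<eta>"
        by (simp add: abs_L_uminus abs_L_mult abs_L_inverse divide_inverse)
      have lt: "abs_L e / abs_L \<eta> < 1" using False aeta by simp
      have fr: "frac_part (P * \<eta>1) = - (e * inverse \<eta>)"
        using frac_eq[of "q - P * A" "P * \<eta>1"] eq ae2 lt
          ispoly_diff[OF ispoly_poly_fls[of Q] ispoly_mult[OF Pp Ap]] q_def by simp
      define P0 where "P0 = int_poly P"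
      have P0e: "poly_fls P0 = P" unfolding P0_def by (rule ispoly_eq[OF Pp])
      have P00: "P0 \<noteq> 0" using P0e \<open>P \<noteq> 0\<close> by auto
      have "(2::real) ^ degree P0 < 2 ^ degree Q"
      proof -
        have "(2::real) ^ degree P0 = abs_L q * abs_L \<eta>" using aqe abs_L_poly_fls[OF P00] P0e by simp
        also have "\<dots> < abs_L q" using aq less.prems(1) by simp
        also have "\<dots> = 2 ^ degree Q" using abs_L_poly_fls[OF less.prems(3)] q_def by simp
        finally show ?thesis .
      qed
      then have dlt: "degree P0 < degree Q" by (simp add: power_strict_increasing_iff)
      have h1: "abs_L \<eta>1 < 1" unfolding \<eta>1_def by (rule abs_L_frac_lt1)
      have h2: "\<forall>j. cf_rem \<eta>1 j \<noteq> 0 \<and> abs_L (cf_rem \<eta>1 j) \<ge> c"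
        unfolding \<eta>1_def cf_rem_shift using less.prems(2) by blast
      have "abs_L (poly_fls P0) * dist_poly (poly_fls P0 * \<eta>1) \<ge> c"
        using less.hyps[OF dlt h1 h2 P00] .
      then have "c \<le> abs_L P * (abs_L e / abs_L \<eta>)"
        using P0e fr ae2 unfolding dist_poly_def by simp
      also have "\<dots> = abs_L q * abs_L e" using aqe aeta by (simp add: field_simps)
      finally show ?thesis using dp q_def by simp
    qed
  qed
qed


lemma abs_L_one[simp]: "abs_L 1 = 1"
  unfolding abs_L_def by simp

lemma UB:
  "abs_L \<eta> < 1 \<Longrightarrow> \<exists>Q. Q \<noteq> 0 \<and> abs_L (poly_fls Q) * dist_poly (poly_fls Q * \<eta>) \<le> abs_L (cf_rem \<eta> n)"
proof (induction n arbitrary: \<eta>)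
  case 0
  have "frac_part \<eta> = \<eta>" by (rule frac_small) (use 0 in \<open>simp add: abs_L_lt1\<close>)
  then show ?case by (intro exI[of _ 1]) (simp add: poly_fls_one dist_poly_def)
next
  case (Suc n)
  show ?case
  proof (cases "\<eta> = 0")
    case True
    have "frac_part (0::'a fls) = 0" by (rule frac_small) simp
    then show ?thesis using True abs_L_ge0
      by (intro exI[of _ 1]) (simp add: poly_fls_one dist_poly_def)
  next
    case False
    have aeta: "abs_L \<eta> > 0" using False abs_L_eq0 abs_L_ge0 by (metis less_eq_real_def)
    define \<eta>1 where "\<eta>1 = frac_part (inverse \<eta>)"
    have h1: "abs_L \<eta>1 < 1" unfolding \<eta>1_def by (rule abs_L_frac_lt1)
    obtain Q' where Q'0: "Q' \<noteq> 0" and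
      Q'b: "abs_L (poly_fls Q') * dist_poly (poly_fls Q' * \<eta>1) \<le> abs_L (cf_rem \<eta>1 n)"
      using Suc.IH[OF h1] by blast
    define q' where "q' = poly_fls Q'"
    define e' where "e' = frac_part (q' * \<eta>1)"
    define P' where "P' = q' * \<eta>1 - e'"
    define A where "A = inverse \<eta> - \<eta>1"
    have Ap: "ispoly A" unfolding A_def \<eta>1_def by (rule ispoly_int_part)
    have P'p: "ispoly P'" unfolding P'_def e'_def by (rule ispoly_int_part)
    have q'p: "ispoly q'" unfolding q'_def by (rule ispoly_poly_fls)
    have q'0: "q' \<noteq> 0" using Q'0 poly_fls_eq0 q'_def by metis
    have aq': "abs_L q' \<ge> 1" using abs_L_ispoly[OF q'p q'0] .
    have ae': "abs_L e' < 1" "abs_L e' \<ge> 0" unfolding e'_def by (rule abs_L_frac_lt1, rule abs_L_ge0)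
    define q where "q = q' * A + P'"
    have qp: "ispoly q" unfolding q_def by (intro ispoly_add ispoly_mult q'p Ap P'p)
    have qeq: "q = q' * inverse \<eta> - e'" unfolding q_def A_def P'_def by (simp add: algebra_simps)
    have "q * \<eta> = q' - e' * \<eta>" unfolding qeq using False by (simp add: algebra_simps)
    then have qe: "q * \<eta> - q' = - (e' * \<eta>)" by simp
    have ae2: "abs_L (- (e' * \<eta>)) = abs_L e' * abs_L \<eta>" by (simp add: abs_L_uminus abs_L_mult)
    have "abs_L e' * abs_L \<eta> < 1" using ae' Suc.prems aeta
      by (metis mult_strict_mono' mult_1_right less_eq_real_def)
    then have fr: "frac_part (q * \<eta>) = - (e' * \<eta>)" using frac_eq[OF q'p, of "q * \<eta>"] qe ae2 by simp
    have aqi: "abs_L (q' * inverse \<eta>) = abs_L q' / abs_L \<eta>"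
      by (simp add: abs_L_mult abs_L_inverse divide_inverse)
    have "abs_L q' / abs_L \<eta> > 1" using aq' aeta Suc.prems
      by (simp add: less_divide_eq)
    then have aq: "abs_L q = abs_L q' / abs_L \<eta>" unfolding qeq
      using abs_L_diff_eq[of e' "q' * inverse \<eta>"] aqi ae' by simp
    define Q where "Q = int_poly q"
    have Qe: "poly_fls Q = q" unfolding Q_def by (rule ispoly_eq[OF qp])
    have Q0: "Q \<noteq> 0" using Qe aq aq' aeta by (auto simp: divide_pos_pos)
    have "abs_L (poly_fls Q) * dist_poly (poly_fls Q * \<eta>) = abs_L q' * abs_L e'"
      unfolding Qe dist_poly_def fr ae2 aq using aeta by (simp add: field_simps)
    also have "\<dots> \<le> abs_L (cf_rem \<eta> (Suc n))"
      using Q'b unfolding \<eta>1_def cf_rem_shift dist_poly_def q'_def e'_def \<eta>1_def by simp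
    finally show ?thesis using Q0 by blast
  qed
qed


lemma dist_shift:
  "dist_poly (Xpow r * poly_fls Q * \<theta>) = dist_poly (poly_fls Q * frac_part (Xpow r * \<theta>))"
proof -
  define y where "y = Xpow r * \<theta>"
  have "Xpow r * poly_fls Q * \<theta> = poly_fls Q * frac_part y + poly_fls Q * (y - frac_part y)"
    unfolding y_def by (simp add: algebra_simps)
  moreover have "ispoly (poly_fls Q * (y - frac_part y))"
    by (intro ispoly_mult ispoly_poly_fls ispoly_int_part)
  ultimately show ?thesis unfolding dist_poly_def y_def by (simp add: frac_add_poly)
qed

lemma dist_ge0: "dist_poly x \<ge> 0"
  unfolding dist_poly_def by (rule abs_L_ge0)

lemma pq_bound:
  assumes "abs_L \<eta> < 1" "\<eta> \<noteq> 0"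
  shows "abs_L \<eta> \<ge> 2 powr (- real (D + 1)) \<longleftrightarrow> degree (int_poly (inverse \<eta>)) \<le> D + 1"
  unfolding pq_deg[OF assms] by (simp, linarith)

theorem lemma3:
  fixes \<theta> :: "'a::{field, finite} fls"
  assumes "prime (card (UNIV :: 'a set))"
  shows "(xadic_inf \<theta> > 0 \<longleftrightarrow> (\<exists>D::nat. bounded_deficiency \<theta> D))
       \<and> (\<forall>D::nat. bounded_deficiency \<theta> D \<longrightarrow> xadic_inf \<theta> \<ge> 2 powr (- real (D + 1)))"
proof -
  define S where "S = {(r::nat, Q::'a poly). Q \<noteq> 0}"
  define f where "f = (\<lambda>rQ. abs_L (poly_fls (snd rQ)) * dist_poly (Xpow (fst rQ) * poly_fls (snd rQ) * \<theta>))"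
  have xi: "xadic_inf \<theta> = Inf (f ` S)" unfolding xadic_inf_def S_def f_def by simp
  have Sne: "S \<noteq> {}" unfolding S_def by (auto intro!: exI[of _ "1::'a poly"])
  have bdd: "bdd_below (f ` S)" unfolding f_def
    by (rule bdd_belowI[of _ 0]) (auto intro!: mult_nonneg_nonneg abs_L_ge0 dist_ge0)
  have fe: "f (r, Q) = abs_L (poly_fls Q) * dist_poly (poly_fls Q * frac_part (Xpow r * \<theta>))" for r Q
    unfolding f_def by (simp add: dist_shift)
  have part2: "xadic_inf \<theta> \<ge> 2 powr (- real (D + 1))" if bd: "bounded_deficiency \<theta> D" for D
    unfolding xi
  proof (rule cINF_greatest[OF Sne])
    fix rQ assume "rQ \<in> S"
    then obtain r Q where rQ: "rQ = (r, Q)" and Q0: "Q \<noteq> 0" unfolding S_def by auto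
    define \<eta> where "\<eta> = frac_part (Xpow r * \<theta>)"
    have ae: "abs_L \<eta> < 1" unfolding \<eta>_def by (rule abs_L_frac_lt1)
    have "\<forall>j. cf_rem \<eta> j \<noteq> 0 \<and> abs_L (cf_rem \<eta> j) \<ge> 2 powr (- real (D + 1))"
    proof
      fix j
      have b: "cf_rem \<eta> j \<noteq> 0 \<and> degree (partial_quotient \<eta> (Suc j)) \<le> D + 1"
        using bd[unfolded bounded_deficiency_def, rule_format, of "Suc j" r] unfolding \<eta>_def
        by simp
      then show "cf_rem \<eta> j \<noteq> 0 \<and> abs_L (cf_rem \<eta> j) \<ge> 2 powr (- real (D + 1))"
        using pq_bound[OF cf_rem_lt1[OF ae], of j D] unfolding partial_quotient_def by simp
    qed
    from LB[OF ae this Q0] show "2 powr (- real (D + 1)) \<le> f rQ"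
      unfolding rQ fe \<eta>_def .
  qed
  have part1: "\<exists>D. bounded_deficiency \<theta> D" if pos: "xadic_inf \<theta> > 0"
  proof -
    obtain n where n: "(1/2::real) ^ n < xadic_inf \<theta>" using real_arch_pow_inv[OF pos, of "1/2"] by auto
    have c: "2 powr (- real (n + 1)) < xadic_inf \<theta>"
    proof -
      have "2 powr (- real (n + 1)) \<le> 2 powr (- real n)" by simp
      also have "\<dots> = (1/2) ^ n" by (simp add: powr_minus powr_realpow power_divide inverse_eq_divide)
      finally show ?thesis using n by simp
    qed
    have "bounded_deficiency \<theta> n"
      unfolding bounded_deficiency_def
    proof (intro allI impI)
      fix r j :: nat assume j: "j \<ge> 1"
      define \<eta> where "\<eta> = frac_part (Xpow r * \<theta>)"
      have ae: "abs_L \<eta> < 1" unfolding \<eta>_def by (rule abs_L_frac_lt1)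
      obtain Q where Q0: "Q \<noteq> 0" and
        Qb: "abs_L (poly_fls Q) * dist_poly (poly_fls Q * \<eta>) \<le> abs_L (cf_rem \<eta> (j - 1))"
        using UB[OF ae] by blast
      have "(r, Q) \<in> S" using Q0 unfolding S_def by simp
      then have "xadic_inf \<theta> \<le> f (r, Q)" unfolding xi by (rule cINF_lower[OF bdd])
      then have ge: "xadic_inf \<theta> \<le> abs_L (cf_rem \<eta> (j - 1))" using Qb fe \<eta>_def by simp
      then have nz: "cf_rem \<eta> (j - 1) \<noteq> 0" using pos by auto
      have "abs_L (cf_rem \<eta> (j - 1)) \<ge> 2 powr (- real (n + 1))" using ge c by simp
      then have "degree (int_poly (inverse (cf_rem \<eta> (j - 1)))) \<le> n + 1"
        using pq_bound[OF cf_rem_lt1[OF ae] nz] by simp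
      then show "cf_rem (frac_part (Xpow r * \<theta>)) (j - 1) \<noteq> 0 \<and>
          degree (partial_quotient (frac_part (Xpow r * \<theta>)) j) \<le> n + 1"
        using nz unfolding partial_quotient_def \<eta>_def by simp
    qed
    then show ?thesis by blast
  qed
  have "(\<exists>D. bounded_deficiency \<theta> D) \<Longrightarrow> xadic_inf \<theta> > 0"
  proof -
    assume "\<exists>D. bounded_deficiency \<theta> D"
    then obtain D where "bounded_deficiency \<theta> D" by blast
    from part2[OF this] show ?thesis by (rule less_le_trans[rotated]) simp
  qed
  then show ?thesis using part1 part2 by blast
qed

end
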